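(* Let $f$, $c_f$ be as in the context and let $(\bar u_k)$ be generated by $\bar u_{k+1}=\bar u_k+\operatorname{argmin}_{\bar v}\{c_f(\bar u_k+\bar v;\bar u_k)+\frac{1}{2\gamma_k}\|\bar v\|_2^2\}$ from $\bar u_0$. Let $S=\{\bar u:f(\bar u)\le f(\bar u_0)\}$, let $\ell_{f,S}$ be the Lipschitz constant of $f$ on $S$, let $C=S+B_1$ where $B_1$ is the closed unit Euclidean ball centered at $0$, and let $M_C>0$ be such that $|f(\bar v)-c_f(\bar v;\bar u)|\le\frac{M_C}{2}\|\bar v-\bar u\|_2^2$ for all $\bar u,\bar v\in C$. Then for any $k$ with $\bar u_k\in S$, any step size $$\gamma_k\le\hat\gamma=\min\{\ell_{f,S}^{-1},M_C^{-1}\}$$ ensures the sufficient decrease condition $f(\bar u_{k+1})\le c_f(\bar u_{k+1};\bar u_k)+\frac{1}{2\gamma_k}\|\bar u_{k+1}-\bar u_k\|_2^2$.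
   Context: Let $h:\mathbb{R}^{\tau d}\to\mathbb{R}$ and $g:\mathbb{R}^{\tau p}\to\mathbb{R}$ be convex quadratic functions, $\tilde x:\mathbb{R}^{\tau p}\to\mathbb{R}^{\tau d}$ differentiable with continuous gradients, and $f(\bar u)=h(\tilde x(\bar u))+g(\bar u)$. For differentiable $F:\mathbb{R}^n\to\mathbb{R}^m$, $\nabla F(z)\in\mathbb{R}^{n\times m}$ is the transposed Jacobian. The convex model is $c_f(\bar u+\bar v;\bar u)=h(\tilde x(\bar u)+\nabla\tilde x(\bar u)^\top\bar v)+g(\bar u+\bar v)$. *)

theory Defs
  imports "HOL-Analysis.Analysis"
begin

definition convex_quadratic :: "(real^'n \<Rightarrow> real) \<Rightarrow> bool" where
  "convex_quadratic q \<longleftrightarrow>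
     (\<exists>(Q::real^'n^'n) (b::real^'n) (c::real).
        transpose Q = Q \<and> (\<forall>x. 0 \<le> x \<bullet> (Q *v x)) \<and>
        (\<forall>x. q x = (1/2) * (x \<bullet> (Q *v x)) + b \<bullet> x + c))"

definition comp_obj ::
  "(real^'d \<Rightarrow> real) \<Rightarrow> (real^'p \<Rightarrow> real) \<Rightarrow> (real^'p \<Rightarrow> real^'d) \<Rightarrow> real^'p \<Rightarrow> real" where
  "comp_obj h g xt u = h (xt u) + g u"

text \<open>The convex model c_f(w; u) = h(xt(u) + J(u)(w - u)) + g(w), where J(u) is the Jacobian
  of xt at u, i.e. J(u) v = (nabla xt(u))^T v.\<close>
definition conv_model ::
  "(real^'d \<Rightarrow> real) \<Rightarrow> (real^'p \<Rightarrow> real) \<Rightarrow> (real^'p \<Rightarrow> real^'d) \<Rightarrow> (real^'p \<Rightarrow> real^'p^'d)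
    \<Rightarrow> real^'p \<Rightarrow> real^'p \<Rightarrow> real" where
  "conv_model h g xt J w u = h (xt u + J u *v (w - u)) + g w"

end

theory Submission
  imports Defs
begin

lemma cq_seg:
  assumes "convex_quadratic q" "0 \<le> s" "s \<le> 1"
  shows "q (a + s *\<^sub>R e) \<le> (1 - s) * q a + s * q (a + e)"
proof -
  obtain Q b c where Q: "\<forall>x. 0 \<le> x \<bullet> (Q *v x)"
    and q: "\<forall>x. q x = (1/2) * (x \<bullet> (Q *v x)) + b \<bullet> x + c"
    using assms(1) unfolding convex_quadratic_def by blast
  have E: "0 \<le> e \<bullet> (Q *v e)" using Q by blast
  have ss: "0 \<le> s - s * s" using assms by (simp add: mult_left_le)
  have "(1 - s) * q a + s * q (a + e) - q (a + s *\<^sub>R e) = (1/2) * (s - s * s) * (e \<bullet> (Q *v e))"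
    unfolding q[rule_format]
    by (simp add: matrix_vector_right_distrib matrix_vector_mult_scaleR inner_add_left inner_add_right algebra_simps)
      (simp add: field_simps)
  moreover have "0 \<le> (1/2) * (s - s * s) * (e \<bullet> (Q *v e))" using E ss by simp
  ultimately show ?thesis by linarith
qed

theorem lemma3:
  fixes h :: "real^'d \<Rightarrow> real" and g :: "real^'p \<Rightarrow> real"
    and xt :: "real^'p \<Rightarrow> real^'d" and J :: "real^'p \<Rightarrow> real^'p^'d"
    and u :: "nat \<Rightarrow> real^'p" and \<gamma> :: "nat \<Rightarrow> real"
    and L M :: real and k :: nat
  assumes h_quad: "convex_quadratic h"
    and g_quad: "convex_quadratic g"
    and xt_deriv: "\<And>v. (xt has_derivative (\<lambda>w. J v *v w)) (at v)"
    and J_cont: "continuous_on UNIV J"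
    and \<gamma>_pos: "\<And>j. \<gamma> j > 0"
    and iter: "\<And>j w. conv_model h g xt J (u (Suc j)) (u j)
                        + 1 / (2 * \<gamma> j) * (norm (u (Suc j) - u j))\<^sup>2
                      \<le> conv_model h g xt J (u j + w) (u j) + 1 / (2 * \<gamma> j) * (norm w)\<^sup>2"
    and L_pos: "L > 0"
    and L_lip: "L-lipschitz_on {v. comp_obj h g xt v \<le> comp_obj h g xt (u 0)} (comp_obj h g xt)"
    and M_pos: "M > 0"
    and M_bound: "\<And>v w. v \<in> {s + b | s b. comp_obj h g xt s \<le> comp_obj h g xt (u 0) \<and> b \<in> cball 0 1}
                   \<Longrightarrow> w \<in> {s + b | s b. comp_obj h g xt s \<le> comp_obj h g xt (u 0) \<and> b \<in> cball 0 1}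
                   \<Longrightarrow> \<bar>comp_obj h g xt w - conv_model h g xt J w v\<bar> \<le> M / 2 * (norm (w - v))\<^sup>2"
    and uk_S: "comp_obj h g xt (u k) \<le> comp_obj h g xt (u 0)"
    and step: "\<gamma> k \<le> min (1 / L) (1 / M)"
  shows "comp_obj h g xt (u (Suc k))
           \<le> conv_model h g xt J (u (Suc k)) (u k) + 1 / (2 * \<gamma> k) * (norm (u (Suc k) - u k))\<^sup>2"
  proof -
  define f where "f = comp_obj h g xt"
  define cm where "cm w = conv_model h g xt J w (u k)" for w
  define d where "d = u (Suc k) - u k"
  define D where "D = norm d"
  define G where "G = \<gamma> k"
  define c1 where "c1 = cm (u (Suc k))"
  define fk where "fk = f (u k)"
  have G0: "G > 0" using \<gamma>_pos G_def by auto
  have LG: "L \<le> 1 / G" and MG: "M \<le> 1 / G"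
  proof -
    have "G \<le> 1 / L" "G \<le> 1 / M" using step G_def by auto
    then show "L \<le> 1 / G" "M \<le> 1 / G" using G0 L_pos M_pos
      by (auto simp: field_simps)
  qed
  have D0: "D \<ge> 0" by (simp add: D_def)
  have usk: "u (Suc k) = u k + d" by (simp add: d_def)
  have cmk: "cm (u k) = fk"
    by (simp add: cm_def fk_def f_def conv_model_def comp_obj_def)
  have A: "cm (u k + s *\<^sub>R d) \<le> (1 - s) * fk + s * c1" if "0 \<le> s" "s \<le> 1" for s
  proof -
    have h1: "h (xt (u k) + s *\<^sub>R (J (u k) *v d)) \<le> (1 - s) * h (xt (u k)) + s * h (xt (u k) + J (u k) *v d)"
      by (rule cq_seg[OF h_quad that])
    have g1: "g (u k + s *\<^sub>R d) \<le> (1 - s) * g (u k) + s * g (u k + d)"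
      by (rule cq_seg[OF g_quad that])
    have "cm (u k + s *\<^sub>R d) = h (xt (u k) + s *\<^sub>R (J (u k) *v d)) + g (u k + s *\<^sub>R d)"
      by (simp add: cm_def conv_model_def matrix_vector_mult_scaleR)
    moreover have "c1 = h (xt (u k) + J (u k) *v d) + g (u k + d)"
      by (simp add: c1_def cm_def conv_model_def usk)
    moreover have "fk = h (xt (u k)) + g (u k)"
      by (simp add: fk_def f_def comp_obj_def)
    ultimately show ?thesis using h1 g1 by (simp add: algebra_simps)
  qed
  have B: "c1 + 1 / (2 * G) * D\<^sup>2 \<le> (1 - t) * fk + t * c1 + t\<^sup>2 * (1 / (2 * G) * D\<^sup>2)"
    if "0 \<le> t" "t \<le> 1" for t
  proof -
    have "c1 + 1 / (2 * G) * D\<^sup>2 \<le> cm (u k + t *\<^sub>R d) + 1 / (2 * G) * (norm (t *\<^sub>R d))\<^sup>2"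
      using iter[of k "t *\<^sub>R d"] by (simp add: c1_def cm_def D_def G_def d_def)
    also have "(norm (t *\<^sub>R d))\<^sup>2 = t\<^sup>2 * D\<^sup>2" using that by (simp add: D_def power_mult_distrib)
    finally show ?thesis using A[OF that] by (simp add: algebra_simps)
  qed
  define C where "C = {s + b | s b. comp_obj h g xt s \<le> comp_obj h g xt (u 0) \<and> b \<in> cball (0::real^'p) 1}"
  have ukC: "u k \<in> C" unfolding C_def using uk_S by force
  have inC: "u k + e \<in> C" if "norm e \<le> 1" for e
    unfolding C_def using uk_S that by force
  have Cb: "f (u k + s *\<^sub>R d) - M / 2 * (s\<^sup>2 * D\<^sup>2) \<le> cm (u k + s *\<^sub>R d)"
    if "0 \<le> s" "s * D \<le> 1" for s
  proof -
    have "norm (s *\<^sub>R d) \<le> 1" using that by (simp add: D_def)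
    then have "\<bar>f (u k + s *\<^sub>R d) - cm (u k + s *\<^sub>R d)\<bar> \<le> M / 2 * (norm (u k + s *\<^sub>R d - u k))\<^sup>2"
      using M_bound[OF ukC[unfolded C_def] inC[unfolded C_def], of "s *\<^sub>R d"] unfolding f_def cm_def by simp
    moreover have "(norm (u k + s *\<^sub>R d - u k))\<^sup>2 = s\<^sup>2 * D\<^sup>2" using that by (simp add: D_def power_mult_distrib)
    ultimately have "\<bar>f (u k + s *\<^sub>R d) - cm (u k + s *\<^sub>R d)\<bar> \<le> M / 2 * (s\<^sup>2 * D\<^sup>2)" by simp
    thus ?thesis by linarith
  qed
  have Lb: "fk - L * (s * D) \<le> f (u k + s *\<^sub>R d)" if "0 \<le> s" for s
  proof (cases "f (u k + s *\<^sub>R d) \<le> f (u 0)")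
    case True
    have "dist (f (u k + s *\<^sub>R d)) (f (u k)) \<le> L * dist (u k + s *\<^sub>R d) (u k)"
      using lipschitz_onD[OF L_lip] True uk_S by (simp add: f_def)
    moreover have "dist (u k + s *\<^sub>R d) (u k) = s * D" using that by (simp add: dist_norm D_def)
    ultimately show ?thesis by (simp add: fk_def dist_real_def)
  next
    case False
    have "0 \<le> L * (s * D)" using L_pos that D0 by simp
    then show ?thesis using uk_S False by (simp add: fk_def f_def)
  qed
  have Dle: "D \<le> 1"
  proof (rule ccontr)
    assume "\<not> D \<le> 1"
    hence D1: "D > 1" by simp
    define t where "t = 1 / D"
    define s where "s = (D - 1) / (2 * D\<^sup>2)"
    have t01: "0 \<le> t" "t < 1" using D1 by (auto simp: t_def)
    have s0: "0 < s" using D1 by (simp add: s_def)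
    have sD: "s * D = (D - 1) / (2 * D)" using D1 by (simp add: s_def power2_eq_square)
    have sD1: "s * D \<le> 1" unfolding sD using D1 by (simp add: field_simps)
    have b1: "c1 + (1 + t) * (1 / (2 * G) * D\<^sup>2) \<le> fk"
    proof -
      have "c1 + 1 / (2 * G) * D\<^sup>2 \<le> (1 - t) * fk + t * c1 + t\<^sup>2 * (1 / (2 * G) * D\<^sup>2)"
        using B t01 by simp
      moreover have "(1 - t) * (c1 + (1 + t) * X) = c1 + X - ((t * c1) + t\<^sup>2 * X)" for X
        by (simp add: algebra_simps power2_eq_square)
      ultimately have "(1 - t) * (c1 + (1 + t) * (1 / (2 * G) * D\<^sup>2)) \<le> (1 - t) * fk"
        by (simp only:)
      thus ?thesis using t01 by simp
    qed
    have c1b: "fk - L * D - M / 2 * (s * D\<^sup>2) \<le> c1"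
    proof -
      have "fk - L * (s * D) - M / 2 * (s\<^sup>2 * D\<^sup>2) \<le> (1 - s) * fk + s * c1"
        using Lb[of s] Cb[of s] A[of s] s0 sD1 D1 by (smt (verit) mult_le_cancel_left1 mult_nonneg_nonneg)
      hence "s * (fk - L * D - M / 2 * (s * D\<^sup>2)) \<le> s * c1"
        by (simp add: algebra_simps power2_eq_square)
      thus ?thesis using s0 by simp
    qed
    have "(1 + t) * (1 / (2 * G) * D\<^sup>2) \<le> L * D + M / 2 * (s * D\<^sup>2)" using b1 c1b by linarith
    hence "(D + 1) * D / (2 * G) \<le> D * (L + M / 2 * (s * D))"
    proof -
      have "(1 + t) * (1 / (2 * G) * D\<^sup>2) = (D + 1) * D / (2 * G)"
        using D1 G0 by (simp add: t_def field_simps power2_eq_square)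
      moreover have "L * D + M / 2 * (s * D\<^sup>2) = D * (L + M / 2 * (s * D))"
        by (simp add: algebra_simps power2_eq_square)
      ultimately show ?thesis using \<open>(1 + t) * (1 / (2 * G) * D\<^sup>2) \<le> L * D + M / 2 * (s * D\<^sup>2)\<close> by linarith
    qed
    moreover have "(D + 1) * D / (2 * G) = D * ((D + 1) / (2 * G))" by simp
    ultimately have e1: "(D + 1) / (2 * G) \<le> L + M / 2 * (s * D)" using D1
      by (metis mult_le_cancel_left_pos zero_less_one order_less_trans)
    have "M / 2 * (s * D) \<le> 1 / G / 2 * (s * D)"
      using MG s0 D1 by (intro mult_right_mono) auto
    hence "(D + 1) / (2 * G) \<le> 1 / G + 1 / G / 2 * (s * D)" using e1 LG by linarith
    moreover have "(D + 1) / (2 * G) = (1 / (2 * G)) * (D + 1)" by simp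
    moreover have "1 / G + 1 / G / 2 * (s * D) = (1 / (2 * G)) * (2 + s * D)" using G0 by (simp add: field_simps)
    moreover have "0 < 1 / (2 * G)" using G0 by simp
    ultimately have "D + 1 \<le> 2 + s * D" by (metis mult_le_cancel_left_pos)
    moreover have "s * D < D - 1" unfolding sD using D1 mult_pos_pos[of "2*D-1" "D-1"] by (simp add: field_simps)
    ultimately show False by linarith
  qed
  have "u (Suc k) \<in> C" using inC[of d] Dle usk D_def by simp
  hence "\<bar>f (u (Suc k)) - c1\<bar> \<le> M / 2 * D\<^sup>2"
    using M_bound[OF ukC[unfolded C_def]] unfolding C_def by (simp add: f_def c1_def cm_def D_def d_def)
  moreover have "M / 2 * D\<^sup>2 \<le> 1 / (2 * G) * D\<^sup>2"
    using MG G0 by (intro mult_right_mono) (auto simp: field_simps)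
  ultimately have "f (u (Suc k)) \<le> c1 + 1 / (2 * G) * D\<^sup>2" by linarith
  thus ?thesis by (simp add: f_def c1_def cm_def D_def d_def G_def)
qed

end
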